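(* For any parameters $S_1,\dots,S_{\mathcal K}$ and $\lambda_1,\dots,\lambda_{\mathcal K}$ of the model in the context, the following are equivalent: (1) $0\in\operatorname{ri}D$; (2) the linear system \[ \sum_{j=1}^{\kappa_i}\alpha_{ij}=\lambda_i\ (i=1,\dots,\mathcal K),\qquad \sum_{i=1}^{\mathcal K}\sum_{j=1}^{\kappa_i}\alpha_{ij}\,\delta_{\ell,s^i_j}=\tfrac1n\ (\ell=1,\dots,n) \] has a positive solution $(\alpha_{ij})$ (all $\alpha_{ij}>0$).
   Context: $n$ nodes, non-empty neighborhoods $S_1,\dots,S_{\mathcal K}\subset\{1,\dots,n\}$ covering $\{1,\dots,n\}$, $\kappa_i=|S_i|$, $S_i=\{s^i_1,\dots,s^i_{\kappa_i}\}$; rates $\lambda_i>0$ with $\sum_{i=1}^{\mathcal K}\lambda_i=1$. $\Lambda_i=\{p\in\mathbb R^{\kappa_i}:p_j\ge0,\sum_jp_j=1\}$. $E:\mathbb R^{\kappa_1+\dots+\kappa_{\mathcal K}}\to\mathbb R^n$ is the linear map sending $p=(p^{(1)},\dots,p^{(\mathcal K)})$ to $x$ with $x_\ell=\sum_{i=1}^{\mathcal K}\sum_{j=1}^{\kappa_i}\lambda_ip^{(i)}_j\delta_{\ell,s^i_j}$; $F:\mathbb R^n\to\mathbb R^n$ is the linear map $F(x)_i=x_i-\frac1n\sum_{j=1}^nx_j$. $D=F(E(\Lambda_1\times\dots\times\Lambda_{\mathcal K}))$. $\operatorname{ri}A$ denotes the relative interior of $A$, i.e. the interior of $A$ regarded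 as a subset of its affine hull. $\delta_{\ell,m}$ is the Kronecker delta. *)

theory Defs
  imports "HOL-Analysis.Analysis"
begin

text \<open>Nodes are the elements of a finite type 'n (so n = CARD('n)); neighborhoods are
indexed by a finite type 'k (so K = CARD('k)).  A point of the simplex Lambda_i is
indexed directly by the elements of S_i (equivalent to indexing by j = 1..kappa_i via
the enumeration s^i_j); entries outside S_i are fixed to 0.\<close>

definition prod_simplex :: "('k::finite \<Rightarrow> 'n::finite set) \<Rightarrow> ('k \<Rightarrow> 'n \<Rightarrow> real) set" where
  "prod_simplex S = {p. \<forall>i. (\<forall>l\<in>S i. 0 \<le> p i l) \<and> (\<forall>l. l \<notin> S i \<longrightarrow> p i l = 0)
                          \<and> (\<Sum>l\<in>S i. p i l) = 1}"

definition Emap :: "('k::finite \<Rightarrow> 'n::finite set) \<Rightarrow> ('k \<Rightarrow> real) \<Rightarrow> ('k \<Rightarrow> 'n \<Rightarrow> real) \<Rightarrow> real^'n" where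
  "Emap S lam p = (\<chi> l. \<Sum>i\<in>UNIV. if l \<in> S i then lam i * p i l else 0)"

definition Fmap :: "real^'n::finite \<Rightarrow> real^'n" where
  "Fmap x = (\<chi> i. x $ i - (\<Sum>j\<in>UNIV. x $ j) / real CARD('n))"

definition Dset :: "('k::finite \<Rightarrow> 'n::finite set) \<Rightarrow> ('k \<Rightarrow> real) \<Rightarrow> (real^'n) set" where
  "Dset S lam = Fmap ` (Emap S lam ` prod_simplex S)"

end

theory Submission
  imports Defs
begin

lemma Emap_comb:
  "Emap S lam (\<lambda>i l. a * p i l + c * q i l) = a *\<^sub>R Emap S lam p + c *\<^sub>R Emap S lam q"
  unfolding Emap_def
  by (simp add: vec_eq_iff sum_distrib_left sum.distrib[symmetric] algebra_simps if_distrib cong: if_cong)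

lemma Fmap_comb:
  "Fmap (a *\<^sub>R x + c *\<^sub>R y) = a *\<^sub>R Fmap x + c *\<^sub>R Fmap (y::real^'n::finite)"
  unfolding Fmap_def
  by (simp add: vec_eq_iff sum_distrib_left sum.distrib add_divide_distrib algebra_simps
      sum_divide_distrib[symmetric])

lemma L_comb:
  "Fmap (Emap S lam (\<lambda>i l. a * p i l + c * q i l)) = a *\<^sub>R Fmap (Emap S lam p) + c *\<^sub>R Fmap (Emap S lam q)"
  by (simp add: Emap_comb Fmap_comb)

lemma P_comb:
  assumes "p \<in> prod_simplex S" "q \<in> prod_simplex S" "0 \<le> a" "0 \<le> c" "a + c = 1"
  shows "(\<lambda>i l. a * p i l + c * q i l) \<in> prod_simplex S"
  using assms unfolding prod_simplex_def
  by (simp add: sum.distrib sum_distrib_left[symmetric])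

lemma P_le1:
  assumes "p \<in> prod_simplex S" "l \<in> S i"
  shows "p i l \<le> 1"
proof -
  have "p i l \<le> (\<Sum>l\<in>S i. p i l)"
    by (rule member_le_sum) (use assms in \<open>auto simp: prod_simplex_def\<close>)
  thus ?thesis using assms by (simp add: prod_simplex_def)
qed

lemma Emap_sum:
  fixes S :: "'k::finite \<Rightarrow> 'n::finite set"
  assumes "p \<in> prod_simplex S" "(\<Sum>i\<in>UNIV. lam i) = 1"
  shows "(\<Sum>l\<in>UNIV. Emap S lam p $ l) = 1"
proof -
  have z: "\<And>i l. l \<notin> S i \<Longrightarrow> p i l = 0" using assms by (auto simp: prod_simplex_def)
  have s: "\<And>i. (\<Sum>l\<in>UNIV. p i l) = 1"
  proof -
    fix i
    have "(\<Sum>l\<in>UNIV. p i l) = (\<Sum>l\<in>S i. p i l)"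
      by (rule sum.mono_neutral_right) (auto simp: z)
    thus "(\<Sum>l\<in>UNIV. p i l) = 1" using assms by (simp add: prod_simplex_def)
  qed
  have "(\<Sum>l\<in>UNIV. Emap S lam p $ l) = (\<Sum>l\<in>UNIV. \<Sum>i\<in>UNIV. lam i * p i l)"
    unfolding Emap_def by (auto intro!: sum.cong simp: z)
  also have "\<dots> = (\<Sum>i\<in>UNIV. lam i * (\<Sum>l\<in>UNIV. p i l))"
    by (subst sum.swap) (simp add: sum_distrib_left)
  also have "\<dots> = 1" using s assms by simp
  finally show ?thesis .
qed

lemma convex_D: "convex (Dset S lam)"
proof (rule convexI)
  fix x y and u v :: real
  assume "x \<in> Dset S lam" "y \<in> Dset S lam" and uv: "0 \<le> u" "0 \<le> v" "u + v = 1"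
  then obtain p q where pq: "p \<in> prod_simplex S" "q \<in> prod_simplex S"
    "x = Fmap (Emap S lam p)" "y = Fmap (Emap S lam q)" by (auto simp: Dset_def)
  have m: "(\<lambda>i l. u * p i l + v * q i l) \<in> prod_simplex S" using pq uv by (intro P_comb)
  have "u *\<^sub>R x + v *\<^sub>R y = Fmap (Emap S lam (\<lambda>i l. u * p i l + v * q i l))"
    using pq by (simp add: L_comb)
  thus "u *\<^sub>R x + v *\<^sub>R y \<in> Dset S lam" using m unfolding Dset_def by blast
qed

theorem lemma3p5:
  fixes S :: "'k::finite \<Rightarrow> 'n::finite set" and lam :: "'k \<Rightarrow> real"
  assumes "\<forall>i. S i \<noteq> {}"
    and "(\<Union>i. S i) = UNIV"
    and "\<forall>i. 0 < lam i"
    and "(\<Sum>i\<in>UNIV. lam i) = 1"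
  shows "(0 \<in> rel_interior (Dset S lam)) \<longleftrightarrow>
    (\<exists>\<alpha> :: 'k \<Rightarrow> 'n \<Rightarrow> real.
        (\<forall>i. \<forall>l\<in>S i. 0 < \<alpha> i l)
      \<and> (\<forall>i. (\<Sum>l\<in>S i. \<alpha> i l) = lam i)
      \<and> (\<forall>l. (\<Sum>i\<in>UNIV. if l \<in> S i then \<alpha> i l else 0) = 1 / real CARD('n)))"
proof -
  define L where "L p = Fmap (Emap S lam p)" for p
  have D: "Dset S lam = L ` prod_simplex S" unfolding Dset_def L_def by auto
  have lamnz: "lam i \<noteq> 0" for i using assms(3) by (metis less_irrefl)
  define b where "b i l = (if l \<in> S i then 1 / real (card (S i)) else 0)" for i l
  have cardpos: "card (S i) > 0" for i using assms(1) by (simp add: card_gt_0_iff)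
  have bP: "b \<in> prod_simplex S" unfolding prod_simplex_def b_def using cardpos assms(1)
    by auto
  have Dne: "Dset S lam \<noteq> {}" using bP D by auto
  note iff = convex_rel_interior_iff[OF convex_D Dne, of 0]
  show ?thesis
  proof
    assume "0 \<in> rel_interior (Dset S lam)"
    then obtain e where e: "e > 1" "(1 - e) *\<^sub>R L b + e *\<^sub>R 0 \<in> Dset S lam"
      using iff bP D by blast
    then obtain q where q: "q \<in> prod_simplex S" "(1 - e) *\<^sub>R L b = L q"
      using D by auto
    define p0 where "p0 i l = (1/e) * q i l + ((e-1)/e) * b i l" for i l
    have p0P: "p0 \<in> prod_simplex S"
      unfolding p0_def using e by (intro P_comb q bP) (auto simp: field_simps)
    have "L p0 = (1/e) *\<^sub>R L q + ((e-1)/e) *\<^sub>R L b"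
      unfolding p0_def L_def by (rule L_comb)
    also have "\<dots> = (1/e) *\<^sub>R ((1 - e) *\<^sub>R L b) + ((e-1)/e) *\<^sub>R L b" using q(2) by simp
    also have "\<dots> = ((1/e) * (1 - e) + (e-1)/e) *\<^sub>R L b" by (simp add: scaleR_add_left)
    also have "(1/e) * (1 - e) + (e-1)/e = 0" using e by (simp add: field_simps)
    finally have "L p0 = 0" by simp
    hence L0: "L p0 = 0" .
    have qnn: "\<And>i l. l \<in> S i \<Longrightarrow> 0 \<le> q i l" using q by (auto simp: prod_simplex_def)
    have p0pos: "\<And>i l. l \<in> S i \<Longrightarrow> 0 < p0 i l"
    proof -
      fix i l assume l: "l \<in> S i"
      have "0 < ((e-1)/e) * b i l" using e l cardpos[of i] by (simp add: b_def)
      moreover have "0 \<le> (1/e) * q i l" using e qnn[OF l] by simp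
      ultimately show "0 < p0 i l" unfolding p0_def by linarith
    qed
    have sumE: "(\<Sum>l\<in>UNIV. Emap S lam p0 $ l) = 1" using Emap_sum[OF p0P assms(4)] .
    have comp: "Emap S lam p0 $ l = 1 / real CARD('n)" for l
    proof -
      have "L p0 $ l = 0" using L0 by simp
      thus ?thesis unfolding L_def Fmap_def using sumE by simp
    qed
    show "\<exists>\<alpha> :: 'k \<Rightarrow> 'n \<Rightarrow> real.
        (\<forall>i. \<forall>l\<in>S i. 0 < \<alpha> i l)
      \<and> (\<forall>i. (\<Sum>l\<in>S i. \<alpha> i l) = lam i)
      \<and> (\<forall>l. (\<Sum>i\<in>UNIV. if l \<in> S i then \<alpha> i l else 0) = 1 / real CARD('n))"
    proof (intro exI[of _ "\<lambda>i l. lam i * p0 i l"] conjI allI ballI)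
      fix i l assume "l \<in> S i" thus "0 < lam i * p0 i l" using p0pos assms(3) by simp
    next
      fix i show "(\<Sum>l\<in>S i. lam i * p0 i l) = lam i"
        using p0P by (simp add: sum_distrib_left[symmetric] prod_simplex_def)
    next
      fix l show "(\<Sum>i\<in>UNIV. if l \<in> S i then lam i * p0 i l else 0) = 1 / real CARD('n)"
        using comp[of l] by (simp add: Emap_def)
    qed
  next
    assume "\<exists>\<alpha> :: 'k \<Rightarrow> 'n \<Rightarrow> real.
        (\<forall>i. \<forall>l\<in>S i. 0 < \<alpha> i l)
      \<and> (\<forall>i. (\<Sum>l\<in>S i. \<alpha> i l) = lam i)
      \<and> (\<forall>l. (\<Sum>i\<in>UNIV. if l \<in> S i then \<alpha> i l else 0) = 1 / real CARD('n))"
    then obtain \<alpha> :: "'k \<Rightarrow> 'n \<Rightarrow> real" where a1: "\<forall>i. \<forall>l\<in>S i. 0 < \<alpha> i l"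
      and a2: "\<forall>i. (\<Sum>l\<in>S i. \<alpha> i l) = lam i"
      and a3: "\<forall>l. (\<Sum>i\<in>UNIV. if l \<in> S i then \<alpha> i l else 0) = 1 / real CARD('n)"
      by blast
    define p0 where "p0 i l = (if l \<in> S i then \<alpha> i l / lam i else 0)" for i l
    have p0P: "p0 \<in> prod_simplex S"
    proof -
      have "(\<Sum>l\<in>S i. p0 i l) = 1" for i
      proof -
        have "lam i \<noteq> 0" using assms(3) by (metis less_irrefl)
        have "(\<Sum>l\<in>S i. p0 i l) = (\<Sum>l\<in>S i. \<alpha> i l / lam i)" by (simp add: p0_def)
        also have "\<dots> = 1" using a2 `lam i \<noteq> 0` by (simp add: sum_divide_distrib[symmetric])
        finally show ?thesis .
      qed
      thus ?thesis using a1 assms(3) unfolding prod_simplex_def p0_def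
        by (auto intro: less_imp_le)
    qed
    have E: "Emap S lam p0 = (\<chi> l. 1 / real CARD('n))"
      unfolding Emap_def vec_eq_iff
    proof
      fix l
      have "(\<Sum>i\<in>UNIV. if l \<in> S i then lam i * p0 i l else 0) = (\<Sum>i\<in>UNIV. if l \<in> S i then \<alpha> i l else 0)"
        using lamnz by (intro sum.cong) (auto simp: p0_def)
      thus "(\<chi> l. \<Sum>i\<in>UNIV. if l \<in> S i then lam i * p0 i l else 0) $ l = (\<chi> l. 1 / real CARD('n)) $ l"
        using a3 by simp
    qed
    have L0: "L p0 = 0" unfolding L_def E Fmap_def by (simp add: vec_eq_iff)
    have mem0: "0 \<in> Dset S lam" using L0 p0P D by auto
    define M where "M = {p0 i l | i l. l \<in> S i}"
    have Mfin: "finite M"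
    proof -
      have "M \<subseteq> (\<lambda>(i,l). p0 i l) ` UNIV" unfolding M_def by auto
      thus ?thesis by (rule finite_subset) simp
    qed
    obtain i0 l0 where "l0 \<in> S i0" using assms(1) by blast
    hence Mne: "M \<noteq> {}" unfolding M_def by blast
    define m where "m = Min M"
    have mpos: "m > 0" unfolding m_def using Mfin Mne a1 assms(3)
      by (subst Min_gr_iff) (auto simp: M_def p0_def)
    have mle: "\<And>i l. l \<in> S i \<Longrightarrow> m \<le> p0 i l" unfolding m_def
      using Mfin by (intro Min_le) (auto simp: M_def)
    show "0 \<in> rel_interior (Dset S lam)"
      unfolding iff
    proof
      fix x assume "x \<in> Dset S lam"
      then obtain q where q: "q \<in> prod_simplex S" "x = L q" using D by auto
      define r where "r i l = (1 + m) * p0 i l + (- m) * q i l" for i l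
      have rP: "r \<in> prod_simplex S"
      proof -
        have "0 \<le> r i l" if l: "l \<in> S i" for i l
        proof -
          have "q i l \<le> 1" using P_le1[OF q(1) l] .
          hence "m * q i l \<le> m" using mpos by (simp add: mult_left_le)
          moreover have "m \<le> p0 i l" using mle[OF l] .
          moreover have "0 \<le> m * p0 i l" using mpos mle[OF l] by simp
          ultimately show ?thesis unfolding r_def by (simp add: algebra_simps)
        qed
        moreover have "r i l = 0" if "l \<notin> S i" for i l
          using that p0P q(1) unfolding r_def prod_simplex_def by simp
        moreover have "(\<Sum>l\<in>S i. r i l) = 1" for i
          using p0P q(1) unfolding r_def prod_simplex_def
          by (simp add: sum_subtractf sum_distrib_left[symmetric])
        ultimately show ?thesis unfolding prod_simplex_def by blast
      qed
      have "L r = (1 + m) *\<^sub>R L p0 + (- m) *\<^sub>R L q" unfolding r_def L_def by (rule L_comb)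
      also have "\<dots> = (1 - (1 + m)) *\<^sub>R x + (1 + m) *\<^sub>R 0" using L0 q(2) by simp
      finally have "(1 - (1 + m)) *\<^sub>R x + (1 + m) *\<^sub>R 0 \<in> Dset S lam" using D rP by (metis image_eqI)
      thus "\<exists>e>1. (1 - e) *\<^sub>R x + e *\<^sub>R 0 \<in> Dset S lam" using mpos by (intro exI[of _ "1+m"]) simp
    qed
  qed
qed

end
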